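(* Let $(a_n)_{n\ge1}$ be a sequence in $(0,\infty)$ such that (i) $\liminf_{N\to\infty}(a_1\cdots a_N)^{1/N}\ge 1$, and (ii) $\limsup_{N\to\infty}\frac1N\sum_{n=1}^N a_n^2\le 1$. Then, as $N\to\infty$, \[ \frac1N\sum_{n=1}^N a_n\to 1,\qquad \frac1N\sum_{n=1}^N a_n^2\to1,\qquad \frac1N\sum_{n=1}^N (a_n-1)^2\to 0 . \] *)

theory Defs
  imports "HOL-Analysis.Analysis"
begin

end

theory Submission
  imports Defs
begin

lemma sum_le_sq: "(\<Sum>n=1..N. a n) \<le> ((\<Sum>n=1..N. (a n)\<^sup>2) + real N) / 2"
proof -
  have "(\<Sum>n=1..N. a n) \<le> (\<Sum>n=1..N. ((a n)\<^sup>2 + 1) / 2)"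
    apply (rule sum_mono)
    using sum_squares_ge_zero[of "a _ - 1" 0] by (simp add: power2_eq_square algebra_simps)
  also have "\<dots> = ((\<Sum>n=1..N. (a n)\<^sup>2) + real N) / 2"
    by (simp add: sum_divide_distrib[symmetric] sum.distrib)
  finally show ?thesis .
qed

lemma mean_le:
  assumes "N \<ge> 1"
  shows "(\<Sum>n=1..N. a n) / real N \<le> ((\<Sum>n=1..N. (a n)\<^sup>2) / real N + 1) / 2"
proof -
  have "(\<Sum>n=1..N. a n) / real N \<le> (((\<Sum>n=1..N. (a n)\<^sup>2) + real N) / 2) / real N"
    using divide_right_mono[OF sum_le_sq[of a N], of "real N"] by simp
  also have "\<dots> = ((\<Sum>n=1..N. (a n)\<^sup>2) / real N + 1) / 2"
    using assms by (simp add: field_simps)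
  finally show ?thesis .
qed

theorem lemma2p1:
  fixes a :: "nat \<Rightarrow> real"
  assumes pos: "\<And>n. n \<ge> 1 \<Longrightarrow> a n > 0"
    and geo: "liminf (\<lambda>N. ereal ((\<Prod>n=1..N. a n) powr (1 / real N))) \<ge> 1"
    and sq: "limsup (\<lambda>N. ereal ((\<Sum>n=1..N. (a n)\<^sup>2) / real N)) \<le> 1"
  shows "(\<lambda>N. (\<Sum>n=1..N. a n) / real N) \<longlonglongrightarrow> 1 \<and>
         (\<lambda>N. (\<Sum>n=1..N. (a n)\<^sup>2) / real N) \<longlonglongrightarrow> 1 \<and>
         (\<lambda>N. (\<Sum>n=1..N. (a n - 1)\<^sup>2) / real N) \<longlonglongrightarrow> 0"
proof -
  define A where "A N = (\<Sum>n=1..N. a n) / real N" for N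
  define Q where "Q N = (\<Sum>n=1..N. (a n)\<^sup>2) / real N" for N
  have AQ: "A N \<le> (Q N + 1) / 2" if "N \<ge> 1" for N
    unfolding A_def Q_def using mean_le[OF that] .
  have QA: "Q N \<ge> 2 * A N - 1" if "N \<ge> 1" for N
  proof -
    have "(\<Sum>n=1..N. 2 * a n - 1) \<le> (\<Sum>n=1..N. (a n)\<^sup>2)"
    proof (rule sum_mono)
      fix n have "0 \<le> (a n - 1)^2" by simp
      thus "2 * a n - 1 \<le> (a n)\<^sup>2" by (simp add: power2_diff)
    qed
    hence "2 * (\<Sum>n=1..N. a n) - real N \<le> (\<Sum>n=1..N. (a n)\<^sup>2)"
      by (simp add: sum_subtractf sum_distrib_left)
    hence "(2 * (\<Sum>n=1..N. a n) - real N) / real N \<le> (\<Sum>n=1..N. (a n)\<^sup>2) / real N"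
      by (simp add: divide_right_mono)
    moreover have "(2 * (\<Sum>n=1..N. a n) - real N) / real N = 2 * A N - 1"
      using that by (simp add: A_def diff_divide_distrib)
    ultimately show ?thesis by (simp add: Q_def)
  qed
  have GA: "(\<Prod>n=1..N. a n) powr (1 / real N) \<le> A N" if "N \<ge> 1" for N
  proof -
    have "(\<Prod>n\<in>{1..N}. a n) powr (1 / card {1..N}) \<le> (\<Sum>n\<in>{1..N}. a n / card {1..N})"
      by (rule arith_geom_mean) (use that pos less_imp_le in auto)
    thus ?thesis by (simp add: A_def sum_divide_distrib)
  qed
  have Qup: "eventually (\<lambda>N. Q N < y) sequentially" if "y > 1" for y
  proof -
    have "eventually (\<lambda>N. ereal y > ereal (Q N)) sequentially"
      using sq[unfolded Limsup_le_iff, rule_format, of "ereal y"] that unfolding Q_def by simp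
    thus ?thesis by simp
  qed
  have Alow: "eventually (\<lambda>N. y < A N) sequentially" if "y < 1" for y
  proof -
    have "eventually (\<lambda>N. ereal y < ereal ((\<Prod>n=1..N. a n) powr (1 / real N))) sequentially"
      using geo[unfolded le_Liminf_iff, rule_format, of "ereal y"] that by simp
    moreover have "eventually (\<lambda>N. N \<ge> 1) sequentially" by (rule eventually_ge_at_top)
    ultimately show ?thesis
      by eventually_elim (use GA in force)
  qed
  have Alim: "A \<longlonglongrightarrow> 1"
  proof (rule order_tendstoI)
    fix y :: real assume "y < 1" thus "eventually (\<lambda>N. y < A N) sequentially" by (rule Alow)
  next
    fix y :: real assume y: "y > 1"
    have "eventually (\<lambda>N. Q N < 2 * y - 1) sequentially" using y by (intro Qup) simp
    moreover have "eventually (\<lambda>N. N \<ge> 1) sequentially" by (rule eventually_ge_at_top)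
    ultimately show "eventually (\<lambda>N. A N < y) sequentially"
      by eventually_elim (use AQ in force)
  qed
  have Qlim: "Q \<longlonglongrightarrow> 1"
  proof (rule order_tendstoI)
    fix y :: real assume y: "y < 1"
    have "eventually (\<lambda>N. (y + 1) / 2 < A N) sequentially" using y by (intro Alow) simp
    moreover have "eventually (\<lambda>N. N \<ge> 1) sequentially" by (rule eventually_ge_at_top)
    ultimately show "eventually (\<lambda>N. y < Q N) sequentially"
      by eventually_elim (use QA in force)
  next
    fix y :: real assume "y > 1" thus "eventually (\<lambda>N. Q N < y) sequentially" by (rule Qup)
  qed
  have "(\<lambda>N. Q N - 2 * A N + 1) \<longlonglongrightarrow> 1 - 2 * 1 + 1"
    by (intro tendsto_intros Qlim Alim)
  hence lim3: "(\<lambda>N. Q N - 2 * A N + 1) \<longlonglongrightarrow> 0" by simp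
  have "eventually (\<lambda>N. Q N - 2 * A N + 1 = (\<Sum>n=1..N. (a n - 1)\<^sup>2) / real N) sequentially"
    using eventually_ge_at_top[of 1]
  proof eventually_elim
    case (elim N)
    have "(\<Sum>n=1..N. (a n - 1)\<^sup>2) = (\<Sum>n=1..N. (a n)\<^sup>2) - 2 * (\<Sum>n=1..N. a n) + real N"
      by (simp add: power2_diff sum.distrib sum_subtractf sum_distrib_left)
    thus ?case using elim by (simp add: A_def Q_def field_simps)
  qed
  hence "(\<lambda>N. (\<Sum>n=1..N. (a n - 1)\<^sup>2) / real N) \<longlonglongrightarrow> 0"
    using lim3 tendsto_cong by fastforce
  thus ?thesis using Alim Qlim unfolding A_def Q_def by simp
qed

end
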